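(* Let $A(x)=\sum_{k=0}^NA_kx^k$ be a $3\times3$ matrix polynomial with $A_N\neq0$, and assume $A_0$ and $A_N$ are invertible. Suppose the system $T_xy=A(x)y$ has spectral type $(3;3;1,1,1,1,1,1,1,1,1)$. Then $N=3$, and there are $a,b\in\mathbb{C}^\times$ and pairwise distinct $c_1,\dots,c_9\in\mathbb{C}^\times$ with $A_0=aI$, $A_3=bI$, $\det A(x)=b^3\prod_{i=1}^9(x+c_i)$ and $b^3\prod_{i=1}^9c_i=a^3$. Moreover, if $\alpha$ satisfies $q^\alpha=a$, the gauge transformation $y=x^\alpha w$ turns the system into $T_xw=a^{-1}A(x)w$, where $a^{-1}A(x)=I+A^{(1)}x+A^{(2)}x^2+\kappa Ix^3$ with $\kappa=b/a$ and $\det(a^{-1}A(x))=\kappa^3\prod_{i=1}^9(x+e_i)$, $e_i=c_i$ pairwise distinct.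
   Context: Fix $q$ with $0<|q|<1$, $T_xf(x)=f(qx)$; $x^\alpha$ satisfies $T_xx^\alpha=q^\alpha x^\alpha$. Spectral type of $T_xy=A(x)y$, $A(x)=\sum_{k=0}^NA_kx^k$ ($M\times M$, $A_N\ne0$): (1) If $A_0\sim\bigoplus_{i=1}^l\bigoplus_{j=1}^{s_i}J(\alpha_i,t_{i,j})$ is the Jordan decomposition ($\alpha_i$ distinct eigenvalues, $J(\alpha,t)$ a Jordan block of size $t$, $t_{i,1}\ge t_{i,2}\ge\cdots$), and $m_i=(m_{i,1},\dots,m_{i,t_{i,1}})$ is the conjugate partition of $(t_{i,1},\dots,t_{i,s_i})$, then $\mathcal{S}_0$ is the list $m_{1,1}\dots m_{1,t_{1,1}},\ \dots,\ m_{l,1}\dots m_{l,t_{l,1}}$; $\mathcal{S}_\infty$ is defined in the same way from $A_N$. (2) Let $a_1,\dots,a_l$ be the distinct zeros of $\det A(x)$, $d_1,\dots,d_M$ the elementary divisors of $A(x)$ (with $d_{k+1}\mid d_k$), $\tilde n^i_k$ the order of vanishing of $d_k$ at $a_i$, and $n^i$ the conjugate partition of $(\tilde n^i_1,\dots,\tilde n^i_M)$; $\mathcal{S}_{\mathrm{div}}$ is the concatenated list of the $n^i$. The spectral type is $(\mathcal{S}_0;\mathcal{S}_\infty;\mathcal{S}_{\mathrm{div}})$. In particular $\mathcal{S}_0=3$ for $M=3$ means $A_0$ is a scalar matrix, and $\mathcal{S}_{\mathrm{div}}=1,1,1,1,1,1,1,1,1$ means $\det A(x)$ has exactly nine distinct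 zeros, each with the corresponding partition $(1)$. *)

theory Defs
  imports "Jordan_Normal_Form.Jordan_Normal_Form_Existence"
          "Jordan_Normal_Form.DL_Submatrix"
          "HOL-Computational_Algebra.Polynomial_Factorial" "HOL-Computational_Algebra.Field_as_Ring"
begin

definition conj_part :: "nat multiset \<Rightarrow> nat list" where
  "conj_part T = map (\<lambda>j. size (filter_mset (\<lambda>t. j \<le> t) T)) [1..<Max (insert 0 (set_mset T)) + 1]"

definition jordan_blocks :: "complex mat \<Rightarrow> (nat \<times> complex) multiset" where
  "jordan_blocks A = mset (SOME n_as. jordan_nf A n_as)"

definition spec_matrix :: "complex mat \<Rightarrow> nat list multiset" where
  "spec_matrix A = (let B = jordan_blocks A in
     image_mset (\<lambda>\<alpha>. conj_part (image_mset fst (filter_mset (\<lambda>p. snd p = \<alpha>) B)))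
                (mset_set (snd ` set_mset B)))"

definition poly_mat :: "nat \<Rightarrow> nat \<Rightarrow> (nat \<Rightarrow> complex mat) \<Rightarrow> complex poly mat" where
  "poly_mat M N A = mat M M (\<lambda>(i,j). \<Sum>k\<le>N. monom (A k $$ (i,j)) k)"

definition eval_mat :: "nat \<Rightarrow> nat \<Rightarrow> (nat \<Rightarrow> complex mat) \<Rightarrow> complex \<Rightarrow> complex mat" where
  "eval_mat M N A x = map_mat (\<lambda>p. poly p x) (poly_mat M N A)"

definition det_div :: "nat \<Rightarrow> complex poly mat \<Rightarrow> nat \<Rightarrow> complex poly" where
  "det_div M P k = Gcd {det (submatrix P I J) | I J.
      I \<subseteq> {..<M} \<and> J \<subseteq> {..<M} \<and> card I = k \<and> card J = k}"

(* elementary divisors d_1,...,d_M with d_{k+1} | d_k  (d_k = D_{M-k+1} / D_{M-k}) *)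
definition elem_div :: "nat \<Rightarrow> complex poly mat \<Rightarrow> nat \<Rightarrow> complex poly" where
  "elem_div M P k = det_div M P (M + 1 - k) div det_div M P (M - k)"

definition spec_div :: "nat \<Rightarrow> complex poly mat \<Rightarrow> nat list multiset" where
  "spec_div M P = image_mset
     (\<lambda>a. conj_part (image_mset (\<lambda>k. order a (elem_div M P k)) (mset [1..<M+1])))
     (mset_set {a. poly (det P) a = 0})"

definition spectral_type ::
  "nat \<Rightarrow> nat \<Rightarrow> (nat \<Rightarrow> complex mat) \<Rightarrow> nat list multiset \<times> nat list multiset \<times> nat list multiset" where
  "spectral_type M N A = (spec_matrix (A 0), spec_matrix (A N), spec_div M (poly_mat M N A))"

end

theory Submission
  imports Defs
begin

lemma det2: fixes M :: "'a :: comm_ring_1 mat" assumes "M \<in> carrier_mat 2 2"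
  shows "det M = M$$(0,0) * M$$(1,1) - M$$(0,1) * M$$(1,0)"
proof -
  have e: "{..<2::nat} = {0,1}" by auto
  have "mat_delete M 0 j \<in> carrier_mat 1 1" for j using mat_delete_carrier[OF assms, of 0 j] by simp
  hence d: "det (mat_delete M 0 j) = mat_delete M 0 j $$ (0,0)" for j by (simp add: det_single)
  have "dim_row M = 2" "dim_col M = 2" using assms by auto
  then show ?thesis
  apply (subst laplace_expansion_row[OF assms, of 0])
  unfolding e cofactor_def d
  apply (auto simp: mat_delete_def)
  done
qed

lemma det3: fixes M :: "'a :: comm_ring_1 mat" assumes "M \<in> carrier_mat 3 3"
  shows "det M = M$$(0,0) * (M$$(1,1) * M$$(2,2) - M$$(1,2) * M$$(2,1))
      - M$$(0,1) * (M$$(1,0) * M$$(2,2) - M$$(1,2) * M$$(2,0))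
      + M$$(0,2) * (M$$(1,0) * M$$(2,1) - M$$(1,1) * M$$(2,0))"
proof -
  have e: "{..<3::nat} = {0,1,2}" by auto
  have "mat_delete M 0 j \<in> carrier_mat 2 2" for j using mat_delete_carrier[OF assms, of 0 j] by simp
  hence d: "det (mat_delete M 0 j) = mat_delete M 0 j $$ (0,0) * mat_delete M 0 j $$ (1,1) - 
     mat_delete M 0 j $$ (0,1) * mat_delete M 0 j $$ (1,0)" for j by (simp add: det2)
  have "dim_row M = 3" "dim_col M = 3" using assms by auto
  then show ?thesis
  apply (subst laplace_expansion_row[OF assms, of 0])
  unfolding e cofactor_def d
  apply (auto simp: mat_delete_def numeral_2_eq_2 algebra_simps)
  done
qed


lemma conj_part_length: "length (conj_part T) = Max (insert 0 (set_mset T))"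
  by (simp add: conj_part_def del: upt_Suc)

lemma conj_part_nth: "i < length (conj_part T) \<Longrightarrow> conj_part T ! i = size (filter_mset (\<lambda>t. Suc i \<le> t) T)"
  by (simp add: conj_part_def nth_append del: upt_Suc)

lemma jm_scalar: fixes \<alpha> :: "'a :: comm_ring_1" assumes "\<forall>p\<in>set n_as. p = (1,\<alpha>)"
  shows "jordan_matrix n_as = \<alpha> \<cdot>\<^sub>m 1\<^sub>m (length n_as)"
  using assms
proof (induction n_as)
  case Nil
  show ?case by (auto simp: jordan_matrix_def intro!: eq_matI)
next
  case (Cons p ps)
  then have IH: "jordan_matrix ps = \<alpha> \<cdot>\<^sub>m 1\<^sub>m (length ps)" and p: "p = (1,\<alpha>)" by auto
  have dr: "dim_row (diag_block_mat (map (\<lambda>(n, a). jordan_block n a) ps)) = length ps"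
   "dim_col (diag_block_mat (map (\<lambda>(n, a). jordan_block n a) ps)) = length ps"
    using arg_cong[OF IH, of dim_row] arg_cong[OF IH, of dim_col] by (auto simp: jordan_matrix_def)
  have "jordan_matrix (p#ps) = four_block_mat (jordan_block 1 \<alpha>) (0\<^sub>m 1 (length ps)) (0\<^sub>m (length ps) 1) (jordan_matrix ps)"
    using p dr by (simp add: jordan_matrix_def Let_def jordan_block_def)
  also have "\<dots> = \<alpha> \<cdot>\<^sub>m 1\<^sub>m (length (p#ps))"
    unfolding IH by (rule eq_matI) (auto simp: jordan_block_def)
  finally show ?case .
qed

lemma scalar_of_spec: assumes A: "A \<in> carrier_mat 3 3" and sp: "spec_matrix A = {#[3]#}"
  shows "\<exists>\<alpha>. A = \<alpha> \<cdot>\<^sub>m 1\<^sub>m 3"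
proof -
  obtain as where "char_poly A = (\<Prod>a\<leftarrow>as. [:-a,1:])" using char_poly_factorized[OF A] by auto
  then have ex: "\<exists>n_as. jordan_nf A n_as" by (rule jordan_nf_exists[OF A])
  define n_as where "n_as = (SOME n_as. jordan_nf A n_as)"
  have jnf: "jordan_nf A n_as" using someI_ex[OF ex] n_as_def by simp
  have B: "jordan_blocks A = mset n_as" by (simp add: jordan_blocks_def n_as_def)
  define E where "E = snd ` set n_as"
  define h where "h = (\<lambda>\<alpha>. conj_part (image_mset fst (filter_mset (\<lambda>p. snd p = \<alpha>) (mset n_as))))"
  have hE: "image_mset h (mset_set E) = {#[3]#}" using sp unfolding spec_matrix_def B Let_def h_def E_def by simp
  then have "size (mset_set E) = 1" by (metis size_image_mset size_single)
  hence "card E = 1" by simp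
  then obtain \<alpha> where E\<alpha>: "E = {\<alpha>}" using card_1_singletonE by blast
  have "h \<alpha> = [3]" using hE E\<alpha> by simp
  have all\<alpha>: "\<forall>p\<in>set n_as. snd p = \<alpha>" using E\<alpha> E_def by auto
  hence "filter_mset (\<lambda>p. snd p = \<alpha>) (mset n_as) = mset n_as" 
    by (metis (mono_tags, lifting) filter_True mset_filter)
  hence c: "conj_part (mset (map fst n_as)) = [3]" using \<open>h \<alpha> = [3]\<close> h_def by simp
  then have "length (conj_part (mset (map fst n_as))) = 1" by simp
  hence M: "Max (insert 0 (set (map fst n_as))) = 1" unfolding conj_part_length by simp
  have le: "\<forall>p\<in>set n_as. fst p \<le> 1"
  proof
    fix p assume "p \<in> set n_as"
    hence "fst p \<le> Max (insert 0 (set (map fst n_as)))" by (intro Max_ge) auto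
    thus "fst p \<le> 1" using M by simp
  qed
  have nz: "0 \<notin> fst ` set n_as" using jnf jordan_nf_def by auto
  have all: "\<forall>p\<in>set n_as. p = (1,\<alpha>)"
  proof
    fix p assume p: "p \<in> set n_as"
    then have "fst p = 1" using le nz by (metis image_eqI le_neq_implies_less less_one)
    then show "p = (1,\<alpha>)" using all\<alpha> p by (metis prod.collapse)
  qed
  have "similar_mat A (jordan_matrix n_as)" using jnf jordan_nf_def by auto
  then obtain P Q where w: "similar_mat_wit A (jordan_matrix n_as) P Q" unfolding similar_mat_def by blast
  let ?k = "length n_as"
  have J: "jordan_matrix n_as = \<alpha> \<cdot>\<^sub>m 1\<^sub>m ?k" by (rule jm_scalar[OF all])
  from w A have P: "P \<in> carrier_mat 3 3" and Q: "Q \<in> carrier_mat 3 3" and PQ: "P * Q = 1\<^sub>m 3"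
    and AJ: "A = P * jordan_matrix n_as * Q" and Jc: "jordan_matrix n_as \<in> carrier_mat 3 3"
    unfolding similar_mat_wit_def Let_def by auto
  have k: "?k = 3" using Jc J by auto
  have "A = P * (\<alpha> \<cdot>\<^sub>m 1\<^sub>m 3) * Q" using AJ J k by simp
  also have "\<dots> = (\<alpha> \<cdot>\<^sub>m P) * Q"
    using mult_smult_distrib[OF P, of "1\<^sub>m 3" 3 \<alpha>] P by simp
  also have "\<dots> = \<alpha> \<cdot>\<^sub>m (P * Q)" by (rule mult_smult_assoc_mat[OF P Q])
  also have "\<dots> = \<alpha> \<cdot>\<^sub>m 1\<^sub>m 3" using PQ by simp
  finally show ?thesis by blast
qed


lemma coeff2: fixes x y :: "'a :: comm_ring_1 poly"
  assumes "degree x \<le> m" "degree y \<le> n"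
  shows "coeff (x*y) (m+n) = coeff x m * coeff y n"
proof -
  have "coeff (x*y) (m+n) = (\<Sum>i\<le>m+n. coeff x i * coeff y (m+n-i))" by (simp add: coeff_mult)
  also have "\<dots> = (\<Sum>i\<le>m+n. if i = m then coeff x m * coeff y n else 0)"
  proof (rule sum.cong[OF refl])
    fix i assume "i \<in> {..m+n}"
    show "coeff x i * coeff y (m+n-i) = (if i = m then coeff x m * coeff y n else 0)"
    proof (cases "i < m")
      case True then have "coeff y (m+n-i) = 0" using assms(2) by (intro coeff_eq_0) simp
      then show ?thesis using True by simp
    next
      case False
      show ?thesis
      proof (cases "i = m")
        case False then have "coeff x i = 0" using \<open>\<not> i < m\<close> assms(1) by (intro coeff_eq_0) simp
        then show ?thesis using False by simp
      qed simp
    qed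
  qed
  also have "\<dots> = coeff x m * coeff y n" by simp
  finally show ?thesis .
qed

lemma coeff3: fixes x y z :: "'a :: comm_ring_1 poly"
  assumes "degree x \<le> n" "degree y \<le> n" "degree z \<le> n"
  shows "coeff (x*y*z) (3*n) = coeff x n * coeff y n * coeff z n"
proof -
  have d: "degree (x*y) \<le> n + n" using assms by (meson add_mono degree_mult_le order_trans)
  have "coeff (x*y*z) ((n+n)+n) = coeff (x*y) (n+n) * coeff z n" by (rule coeff2[OF d assms(3)])
  also have "\<dots> = coeff x n * coeff y n * coeff z n" using coeff2[OF assms(1,2)] by simp
  finally show ?thesis by (simp add: numeral_3_eq_3 add.assoc)
qed

lemma deg3: fixes x y z :: "'a :: comm_ring_1 poly"
  assumes "degree x \<le> n" "degree y \<le> n" "degree z \<le> n"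
  shows "degree (x*y*z) \<le> 3*n"
proof -
  have "degree (x*y*z) \<le> degree (x*y) + degree z" by (rule degree_mult_le)
  moreover have "degree (x*y) \<le> degree x + degree y" by (rule degree_mult_le)
  ultimately show ?thesis using assms by linarith
qed

lemma pm_carrier: "poly_mat M N A \<in> carrier_mat M M" by (simp add: poly_mat_def)

lemma pm_index: "i<M \<Longrightarrow> j<M \<Longrightarrow> poly_mat M N A $$ (i,j) = (\<Sum>k\<le>N. monom (A k $$ (i,j)) k)"
  by (simp add: poly_mat_def)

lemma pm_coeff: "i<M \<Longrightarrow> j<M \<Longrightarrow> coeff (poly_mat M N A $$ (i,j)) n = (if n \<le> N then A n $$ (i,j) else 0)"
  by (simp add: pm_index coeff_sum coeff_monom)

lemma pm_degree: "i<M \<Longrightarrow> j<M \<Longrightarrow> degree (poly_mat M N A $$ (i,j)) \<le> N"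
  by (rule degree_le) (simp add: pm_coeff)

lemma det_expand: fixes M :: "'a :: comm_ring_1 mat" assumes "M \<in> carrier_mat 3 3"
  shows "det M = M$$(0,0) * M$$(1,1) * M$$(2,2) - M$$(0,0) * M$$(1,2) * M$$(2,1)
    - M$$(0,1) * M$$(1,0) * M$$(2,2) + M$$(0,1) * M$$(1,2) * M$$(2,0)
    + M$$(0,2) * M$$(1,0) * M$$(2,1) - M$$(0,2) * M$$(1,1) * M$$(2,0)"
  unfolding det3[OF assms] by (simp add: algebra_simps)

lemma det_facts:
  assumes A0: "A 0 = a \<cdot>\<^sub>m 1\<^sub>m 3" and AN: "A N = b \<cdot>\<^sub>m 1\<^sub>m 3"
  shows "degree (det (poly_mat 3 N A)) \<le> 3*N"
    "coeff (det (poly_mat 3 N A)) (3*N) = b^3"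
    "coeff (det (poly_mat 3 N A)) 0 = a^3"
proof -
  let ?P = "poly_mat 3 N A"
  have dg: "degree (?P $$ (i,j)) \<le> N" if "i < 3" "j < 3" for i j using pm_degree that by blast
  have cN: "coeff (?P $$ (i,j)) N = (if i = j then b else 0)" if "i < 3" "j < 3" for i j 
    using pm_coeff[OF that, where n=N and N=N and A=A] that AN by simp
  have c0: "coeff (?P $$ (i,j)) 0 = (if i = j then a else 0)" if "i < 3" "j < 3" for i j 
    using pm_coeff[OF that, where n=0 and N=N and A=A] that A0 by simp
  note ex = det_expand[OF pm_carrier[of 3 N A]]
  have D: "\<And>i j k l m n. i < 3 \<Longrightarrow> j < 3 \<Longrightarrow> k < 3 \<Longrightarrow> l < 3 \<Longrightarrow> m < 3 \<Longrightarrow> n < 3 \<Longrightarrow>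
     degree (?P$$(i,j) * ?P$$(k,l) * ?P$$(m,n)) \<le> 3*N" by (intro deg3 dg)
  have C: "\<And>i j k l m n. i < 3 \<Longrightarrow> j < 3 \<Longrightarrow> k < 3 \<Longrightarrow> l < 3 \<Longrightarrow> m < 3 \<Longrightarrow> n < 3 \<Longrightarrow>
     coeff (?P$$(i,j) * ?P$$(k,l) * ?P$$(m,n)) (3*N) = coeff (?P$$(i,j)) N * coeff (?P$$(k,l)) N * coeff (?P$$(m,n)) N" 
    by (intro coeff3 dg)
  show "degree (det ?P) \<le> 3*N" unfolding ex
    by (intro degree_add_le degree_diff_le D) auto
  show "coeff (det ?P) (3*N) = b^3" unfolding ex
    by (simp add: C cN power3_eq_cube)
  show "coeff (det ?P) 0 = a^3" unfolding ex
    by (simp add: c0 coeff_mult_0 power3_eq_cube)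
qed


lemma pick_delete: assumes "k < n - 1" "j < n"
  shows "pick ({..<n} - {j}) k = (if k < j then k else Suc k)"
proof -
  let ?x = "if k < j then k else Suc k"
  have mem: "?x \<in> {..<n} - {j}" using assms by auto
  have "{a \<in> {..<n} - {j}. a < ?x} = (if k < j then {..<k} else {..<Suc k} - {j})" using assms by auto
  hence "card {a \<in> {..<n} - {j}. a < ?x} = k" using assms by auto
  then show ?thesis using pick_card_in_set[OF mem] by simp
qed

lemma mat_delete_submatrix: assumes M: "M \<in> carrier_mat n n" and i: "i < n" and j: "j < n"
  shows "mat_delete M i j = submatrix M ({..<n} - {i}) ({..<n} - {j})"
proof -
  have c: "card {a. a < n \<and> a \<in> {..<n} - {x}} = n - 1" if "x < n" for x
  proof -
    have "{a. a < n \<and> a \<in> {..<n} - {x}} = {..<n} - {x}" by auto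
    thus ?thesis using that by simp
  qed
  show ?thesis
  proof (rule eq_matI)
    show "dim_row (mat_delete M i j) = dim_row (submatrix M ({..<n} - {i}) ({..<n} - {j}))"
      using M c[OF i] by (simp add: dim_submatrix)
    show "dim_col (mat_delete M i j) = dim_col (submatrix M ({..<n} - {i}) ({..<n} - {j}))"
      using M c[OF j] by (simp add: dim_submatrix)
    fix a b assume a: "a < dim_row (submatrix M ({..<n} - {i}) ({..<n} - {j}))"
      and b: "b < dim_col (submatrix M ({..<n} - {i}) ({..<n} - {j}))"
    then have a': "a < n - 1" and b': "b < n - 1" using M c[OF i] c[OF j] by (auto simp: dim_submatrix)
    show "mat_delete M i j $$ (a, b) = submatrix M ({..<n} - {i}) ({..<n} - {j}) $$ (a, b)"
      using a b M a' b' c[OF i] c[OF j]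
      by (simp add: submatrix_index dim_submatrix mat_delete_def pick_delete[OF a' i] pick_delete[OF b' j])
  qed
qed

lemma submatrix_full: assumes M: "M \<in> carrier_mat n n"
  shows "submatrix M {..<n} {..<n} = M"
proof -
  have c: "{a. a < n \<and> a \<in> {..<n}} = {..<n}" by auto
  have p: "pick {..<n} k = k" if "k < n" for k
  proof -
    have "{a \<in> {..<n}. a < k} = {..<k}" using that by auto
    thus ?thesis using pick_card_in_set[of k "{..<n}"] that by simp
  qed
  show ?thesis
    by (rule eq_matI) (use M c p in \<open>auto simp: dim_submatrix submatrix_index\<close>)
qed

lemma dvd_det: fixes M :: "'a :: comm_ring_1 mat"
  assumes M: "M \<in> carrier_mat n n" and n: "0 < n" and d: "\<And>i j. i < n \<Longrightarrow> j < n \<Longrightarrow> x dvd M $$ (i,j)"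
  shows "x dvd det M"
  unfolding laplace_expansion_row[OF M n]
  by (intro dvd_sum dvd_mult2 d n) auto

lemma finite_card_sub: "I \<subseteq> {..<(n::nat)} \<Longrightarrow> card {i. i < n \<and> i \<in> I} = card I"
proof -
  assume "I \<subseteq> {..<n}" then have "{i. i < n \<and> i \<in> I} = I" by auto
  thus ?thesis by simp
qed

lemma D0: fixes P :: "complex poly mat" shows "det_div n P 0 = 1"
proof -
  have z: "I \<subseteq> {..<n} \<Longrightarrow> card I = 0 \<Longrightarrow> I = {}" for I
    using finite_subset by fastforce
  have d: "det (submatrix P {} {}) = 1" by (rule det_dim_zero) (simp add: submatrix_def)
  have "{det (submatrix P I J) | I J. I \<subseteq> {..<n} \<and> J \<subseteq> {..<n} \<and> card I = 0 \<and> card J = 0} = {1}"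
    (is "?S = _")
  proof (rule equalityI; rule subsetI)
    fix x assume "x \<in> ?S"
    then obtain I J where x: "x = det (submatrix P I J)" and "I \<subseteq> {..<n}" "J \<subseteq> {..<n}" "card I = 0" "card J = 0" by blast
    then have "I = {}" "J = {}" using z by blast+
    then show "x \<in> {1}" using x d by simp
  next
    fix x :: "complex poly" assume "x \<in> {1}"
    then show "x \<in> ?S" using d by (intro CollectI exI[of _ "{}"]) simp
  qed
  thus ?thesis by (simp add: det_div_def)
qed

lemma D1_entry: fixes P :: "complex poly mat"
  assumes P: "P \<in> carrier_mat n n" and i: "i < n" and j: "j < n"
  shows "det_div n P 1 dvd P $$ (i,j)"
proof -
  have s: "{a. a < n \<and> a \<in> {x}} = {x}" if "x < n" for x using that by auto
  have pk: "pick {x} 0 = x" for x by (simp, rule Least_equality, auto)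
  have r: "dim_row P = n" "dim_col P = n" using P by auto
  have c1: "card {a. a < dim_row P \<and> a \<in> {i}} = 1" unfolding r s[OF i] by simp
  have c2: "card {a. a < dim_col P \<and> a \<in> {j}} = 1" unfolding r s[OF j] by simp
  have "submatrix P {i} {j} \<in> carrier_mat 1 1" using c1 c2 by (simp only: carrier_mat_def dim_submatrix mem_Collect_eq)
  hence "det (submatrix P {i} {j}) = submatrix P {i} {j} $$ (0,0)" by (rule det_single)
  also have "\<dots> = P $$ (pick {i} 0, pick {j} 0)" by (rule submatrix_index; unfold c1 c2; simp)
  also have "\<dots> = P $$ (i,j)" unfolding pk ..
  finally have e: "det (submatrix P {i} {j}) = P $$ (i,j)" .
  have "det (submatrix P {i} {j}) \<in> {det (submatrix P I J) | I J. I \<subseteq> {..<n} \<and> J \<subseteq> {..<n} \<and> card I = 1 \<and> card J = 1}"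
    using i j by (intro CollectI exI[of _ "{i}"] exI[of _ "{j}"]) simp
  then show ?thesis unfolding det_div_def e by (rule Gcd_dvd)
qed

lemma D1_D2: fixes P :: "complex poly mat"
  assumes P: "P \<in> carrier_mat n n"
  shows "det_div n P 1 dvd det_div n P 2"
  unfolding det_div_def[of n P 2]
proof (rule Gcd_greatest, clarify)
  fix I J assume I: "I \<subseteq> {..<n}" and J: "J \<subseteq> {..<n}" and cI: "card I = 2" and cJ: "card J = 2"
  have r: "dim_row P = n" "dim_col P = n" using P by auto
  have c1: "card {a. a < dim_row P \<and> a \<in> I} = 2" unfolding r finite_card_sub[OF I] cI ..
  have c2: "card {a. a < dim_col P \<and> a \<in> J} = 2" unfolding r finite_card_sub[OF J] cJ ..
  have "submatrix P I J \<in> carrier_mat 2 2" using c1 c2 by (simp only: carrier_mat_def dim_submatrix mem_Collect_eq)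
  then show "det_div n P 1 dvd det (submatrix P I J)"
  proof (rule dvd_det)
    show "0 < (2::nat)" by simp
    fix a b :: nat assume a: "a < 2" and b: "b < 2"
    have "pick I a \<in> I" by (rule pick_in_set) (use a cI in simp)
    moreover have "pick J b \<in> J" by (rule pick_in_set) (use b cJ in simp)
    ultimately have lt: "pick I a < n" "pick J b < n" using I J by auto
    have "submatrix P I J $$ (a,b) = P $$ (pick I a, pick J b)"
      by (rule submatrix_index; unfold c1 c2; simp add: a b)
    then show "det_div n P 1 dvd submatrix P I J $$ (a,b)" using D1_entry[OF P lt] by simp
  qed
qed

lemma D3: fixes P :: "complex poly mat"
  assumes P: "P \<in> carrier_mat n n"
  shows "det_div n P n = normalize (det P)"
proof -
  have z: "I \<subseteq> {..<n} \<Longrightarrow> card I = n \<Longrightarrow> I = {..<n}" for I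
    by (simp add: card_subset_eq)
  have "{det (submatrix P I J) | I J. I \<subseteq> {..<n} \<and> J \<subseteq> {..<n} \<and> card I = n \<and> card J = n} = {det P}"
    (is "?S = _")
  proof (rule equalityI; rule subsetI)
    fix x assume "x \<in> ?S"
    then obtain I J where x: "x = det (submatrix P I J)" and "I \<subseteq> {..<n}" "J \<subseteq> {..<n}" "card I = n" "card J = n" by blast
    then have "I = {..<n}" "J = {..<n}" using z by blast+
    then show "x \<in> {det P}" using x submatrix_full[OF P] by simp
  next
    fix x assume "x \<in> {det P}"
    then show "x \<in> ?S" using submatrix_full[OF P] by (intro CollectI exI[of _ "{..<n}"]) simp
  qed
  thus ?thesis by (simp add: det_div_def)
qed

lemma D2_D3: fixes P :: "complex poly mat"
  assumes P: "P \<in> carrier_mat 3 3"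
  shows "det_div 3 P 2 dvd det P"
proof -
  have "det_div 3 P 2 dvd det (mat_delete P 0 j)" if j: "j < 3" for j
    unfolding mat_delete_submatrix[OF P _ j, of 0, simplified] det_div_def
    by (rule Gcd_dvd, intro CollectI exI[of _ "{..<3} - {0}"] exI[of _ "{..<3} - {j}"]) (use j in \<open>auto\<close>)
  then show ?thesis
    unfolding laplace_expansion_row[OF P, of 0, simplified] cofactor_def
    by (intro dvd_sum dvd_mult) auto
qed

lemma order_div: fixes p q :: "complex poly" assumes "q dvd p" "p \<noteq> 0"
  shows "order r (p div q) = order r p - order r q" "order r q \<le> order r p"
proof -
  have e: "q * (p div q) = p" using assms(1) by simp
  have "order r p = order r q + order r (p div q)" using order_mult[of q "p div q" r] e assms(2) by simp
  then show "order r (p div q) = order r p - order r q" "order r q \<le> order r p" by simp_all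
qed

lemma conj1: assumes h: "conj_part {#x,y,z#} = [1]" shows "x + y + z = (1::nat)"
proof -
  have "length (conj_part {#x,y,z#}) = 1" using h by simp
  then have M: "Max (insert 0 (set_mset {#x,y,z#})) = 1" unfolding conj_part_length .
  have le: "t \<le> 1" if "t \<in> {x,y,z}" for t
  proof -
    have "t \<le> Max (insert 0 (set_mset {#x,y,z#}))" using that by (intro Max_ge) auto
    thus ?thesis using M by simp
  qed
  have "conj_part {#x,y,z#} ! 0 = size (filter_mset (\<lambda>t. Suc 0 \<le> t) {#x,y,z#})"
    by (rule conj_part_nth) (simp add: h)
  then have s: "size (filter_mset (\<lambda>t. Suc 0 \<le> t) {#x,y,z#}) = 1" using h by simp
  have "x \<le> 1" "y \<le> 1" "z \<le> 1" using le by auto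
  then have "x \<in> {0,1}" "y \<in> {0,1}" "z \<in> {0,1}" by auto
  then show ?thesis using s by auto
qed

lemma smult_mat_vec: fixes E :: "complex mat" assumes "E \<in> carrier_mat n n" "w \<in> carrier_vec n"
  shows "(c \<cdot>\<^sub>m E) *\<^sub>v w = c \<cdot>\<^sub>v (E *\<^sub>v w)"
  by (rule eq_vecI) (use assms in \<open>auto simp: scalar_prod_def sum_distrib_left algebra_simps\<close>)

lemma vec_aux: fixes W V :: "complex vec" assumes k: "k \<noteq> 0" and a: "a \<noteq> 0"
  and W: "W \<in> carrier_vec n" and V: "V \<in> carrier_vec n"
  shows "((a*k) \<cdot>\<^sub>v W = k \<cdot>\<^sub>v V) \<longleftrightarrow> (W = (1/a) \<cdot>\<^sub>v V)"
proof -
  have "((a*k) \<cdot>\<^sub>v W = k \<cdot>\<^sub>v V) \<longleftrightarrow> (\<forall>i<n. a * k * W $ i = k * V $ i)"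
    using W V by (auto simp: vec_eq_iff)
  also have "\<dots> \<longleftrightarrow> (\<forall>i<n. W $ i = (1/a) * V $ i)"
    using k a by (auto simp: field_simps)
  also have "\<dots> \<longleftrightarrow> (W = (1/a) \<cdot>\<^sub>v V)"
    using W V by (auto simp: vec_eq_iff)
  finally show ?thesis .
qed

lemma det_map_smult: assumes P: "(P :: complex poly mat) \<in> carrier_mat n n"
  shows "det (map_mat (Polynomial.smult c) P) = Polynomial.smult (c^n) (det P)"
proof -
  have "map_mat (Polynomial.smult c) P = [:c:] \<cdot>\<^sub>m P"
    by (rule eq_matI) (use P in auto)
  then show ?thesis using P by (simp add: poly_const_pow)
qed

theorem mainTheorem4:
  fixes q :: complex and A :: "nat \<Rightarrow> complex mat" and N :: nat
  assumes q: "0 < cmod q" "cmod q < 1"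
    and carr: "\<forall>k\<le>N. A k \<in> carrier_mat 3 3"
    and lead: "A N \<noteq> 0\<^sub>m 3 3"
    and inv0: "invertible_mat (A 0)" and invN: "invertible_mat (A N)"
    and stype: "spectral_type 3 N A = ({#[3]#}, {#[3]#}, replicate_mset 9 [1])"
  shows "N = 3 \<and>
    (\<exists>a b :: complex. \<exists>c :: nat \<Rightarrow> complex.
       a \<noteq> 0 \<and> b \<noteq> 0 \<and> inj_on c {1..9} \<and> (\<forall>i\<in>{1..9}. c i \<noteq> 0) \<and>
       A 0 = a \<cdot>\<^sub>m 1\<^sub>m 3 \<and> A 3 = b \<cdot>\<^sub>m 1\<^sub>m 3 \<and>
       det (poly_mat 3 N A) = Polynomial.smult (b ^ 3) (\<Prod>i=1..9. [:c i, 1:]) \<and>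
       b ^ 3 * (\<Prod>i=1..9. c i) = a ^ 3 \<and>
       (\<forall>u :: complex \<Rightarrow> complex. (\<forall>x. x \<noteq> 0 \<longrightarrow> u x \<noteq> 0 \<and> u (q * x) = a * u x) \<longrightarrow>
          (\<forall>w :: complex \<Rightarrow> complex vec. (\<forall>x. w x \<in> carrier_vec 3) \<longrightarrow>
             ((\<forall>x. x \<noteq> 0 \<longrightarrow> u (q * x) \<cdot>\<^sub>v w (q * x) = eval_mat 3 N A x *\<^sub>v (u x \<cdot>\<^sub>v w x))
              \<longleftrightarrow> (\<forall>x. x \<noteq> 0 \<longrightarrow> w (q * x) = ((1 / a) \<cdot>\<^sub>m eval_mat 3 N A x) *\<^sub>v w x)))) \<and>
       (let \<kappa> = b / a in
          (\<exists>A1 A2. A1 \<in> carrier_mat 3 3 \<and> A2 \<in> carrier_mat 3 3 \<and>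
             (\<forall>x. (1 / a) \<cdot>\<^sub>m eval_mat 3 N A x =
                   1\<^sub>m 3 + x \<cdot>\<^sub>m A1 + x ^ 2 \<cdot>\<^sub>m A2 + (\<kappa> * x ^ 3) \<cdot>\<^sub>m 1\<^sub>m 3)) \<and>
          det (map_mat (Polynomial.smult (1 / a)) (poly_mat 3 N A)) =
             Polynomial.smult (\<kappa> ^ 3) (\<Prod>i=1..9. [:c i, 1:])))"
proof -
  let ?P = "poly_mat 3 N A"
  have Pc: "?P \<in> carrier_mat 3 3" by (rule pm_carrier)
  from stype have s0: "spec_matrix (A 0) = {#[3]#}" and sN: "spec_matrix (A N) = {#[3]#}"
    and sd: "spec_div 3 ?P = replicate_mset 9 [1]" by (auto simp: spectral_type_def)
  obtain a where a: "A 0 = a \<cdot>\<^sub>m 1\<^sub>m 3" using scalar_of_spec[OF _ s0] carr by auto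
  obtain b where b: "A N = b \<cdot>\<^sub>m 1\<^sub>m 3" using scalar_of_spec[OF _ sN] carr by auto
  have b0: "b \<noteq> 0"
  proof
    assume "b = 0"
    then have "A N = 0\<^sub>m 3 3" using b by (auto intro!: eq_matI)
    then show False using lead by simp
  qed
  have a0: "a \<noteq> 0"
  proof -
    from inv0 obtain B where AB: "A 0 * B = 1\<^sub>m (dim_row (A 0))" and BA: "B * A 0 = 1\<^sub>m (dim_row B)"
      unfolding invertible_mat_def inverts_mat_def by blast
    have A0c: "A 0 \<in> carrier_mat 3 3" using carr by auto
    have "dim_col (B * A 0) = 3" using A0c by simp
    then have rB: "dim_row B = 3" using BA by (metis index_one_mat(3))
    have "dim_col (A 0 * B) = dim_col B" by simp
    then have cB: "dim_col B = 3" using AB A0c by (metis carrier_matD(1) index_one_mat(3))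
    have Bc: "B \<in> carrier_mat 3 3" using rB cB by auto
    have "det (A 0 * B) = det (A 0) * det B" by (rule det_mult[OF A0c Bc])
    moreover have "det (A 0 * B) = 1" using AB A0c by simp
    moreover have "det (A 0) = a ^ 3" using a by simp
    ultimately have "a ^ 3 * det B = 1" by simp
    then show ?thesis by auto
  qed
  note df = det_facts[OF a b]
  have cN: "coeff (det ?P) (3*N) \<noteq> 0" using df(2) b0 by simp
  have dP0: "det ?P \<noteq> 0" using cN by auto
  have degP: "degree (det ?P) = 3*N" using df(1) le_degree[OF cN] by simp
  have lc: "lead_coeff (det ?P) = b^3" using degP df(2) by simp
  define S where "S = {z. poly (det ?P) z = 0}"
  define g where "g = (\<lambda>z. conj_part (image_mset (\<lambda>k. order z (elem_div 3 ?P k)) (mset [1..<3+1])))"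
  have gS: "image_mset g (mset_set S) = replicate_mset 9 [1]"
    using sd unfolding spec_div_def g_def S_def .
  have cardS: "card S = 9" using arg_cong[OF gS, of size] by simp
  have finS: "finite S" using cardS by (metis card.infinite zero_neq_numeral)
  have ord1: "order z (det ?P) = 1" if z: "z \<in> S" for z
  proof -
    have "g z \<in># image_mset g (mset_set S)" using z finS by simp
    then have gz: "g z = [1]" unfolding gS by (metis in_replicate_mset)
    define D1 where "D1 = det_div 3 ?P 1"
    define D2 where "D2 = det_div 3 ?P 2"
    define D3 where "D3 = det_div 3 ?P 3"
    have D3e: "D3 = normalize (det ?P)" unfolding D3_def by (rule D3[OF Pc])
    have d12: "D1 dvd D2" unfolding D1_def D2_def by (rule D1_D2[OF Pc])
    have d23: "D2 dvd D3" unfolding D3e D2_def using D2_D3[OF Pc] by simp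
    have D3nz: "D3 \<noteq> 0" using D3e dP0 by simp
    have D2nz: "D2 \<noteq> 0" using d23 D3nz by auto
    have e1: "elem_div 3 ?P 1 = D3 div D2" by (simp add: elem_div_def D3_def D2_def)
    have e2: "elem_div 3 ?P 2 = D2 div D1" by (simp add: elem_div_def D2_def D1_def)
    have e3: "elem_div 3 ?P 3 = D1" by (simp add: elem_div_def D1_def D0)
    have "mset [1..<3+1] = {#1::nat, 2, 3#}" by (simp add: numeral_3_eq_3)
    then have "image_mset (\<lambda>k. order z (elem_div 3 ?P k)) (mset [1..<3+1]) = {#order z (D3 div D2), order z (D2 div D1), order z D1#}"
      by (simp only: image_mset_add_mset image_mset_empty e1 e2 e3)
    then have "g z = conj_part {#order z (D3 div D2), order z (D2 div D1), order z D1#}"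
      unfolding g_def by (simp only:)
    then have sum1: "order z (D3 div D2) + order z (D2 div D1) + order z D1 = 1"
      using gz conj1 by metis
    note o1 = order_div[OF d23 D3nz, of z] and o2 = order_div[OF d12 D2nz, of z]
    have "order z D3 = 1" using sum1 o1 o2 by linarith
    moreover have "order z D3 = order z (det ?P)"
    proof -
      have "unit_factor (lead_coeff (det ?P)) \<noteq> 0" using dP0 by simp
      then show ?thesis unfolding D3e normalize_poly_old_def by (simp add: order_smult)
    qed
    ultimately show ?thesis by simp
  qed
  have dec: "det ?P = Polynomial.smult (b^3) (\<Prod>z\<in>S. [:-z, 1:])"
  proof -
    have "det ?P = Polynomial.smult (lead_coeff (det ?P)) (\<Prod>z | poly (det ?P) z = 0. [:- z, 1:] ^ order z (det ?P))"
      by (rule complex_poly_decompose[symmetric])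
    also have "\<dots> = Polynomial.smult (b^3) (\<Prod>z\<in>S. [:-z, 1:])"
      unfolding lc S_def[symmetric] by (rule arg_cong[where f="Polynomial.smult (b^3)"], rule prod.cong) (auto simp: ord1)
    finally show ?thesis .
  qed
  have "degree (det ?P) = card S"
  proof -
    have "degree (\<Prod>z\<in>S. [:-z, 1:]) = (\<Sum>z\<in>S. degree [:-z, 1::complex:])"
      by (rule degree_prod_sum_eq) simp
    then show ?thesis unfolding dec using b0 by (simp add: degree_smult_eq)
  qed
  then have N3: "N = 3" using degP cardS by simp
  obtain f where bij: "bij_betw f {1..9::nat} S" using ex_bij_betw_nat_finite_1[OF finS] cardS by auto
  define c where "c = (\<lambda>i. - f i)"
  have injc: "inj_on c {1..9}" using bij_betw_imp_inj_on[OF bij] unfolding c_def inj_on_def by auto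
  have p0: "poly (det ?P) 0 = a^3" using df(3) by (simp add: poly_0_coeff_0)
  have cnz: "\<forall>i\<in>{1..9}. c i \<noteq> 0"
  proof
    fix i :: nat assume "i \<in> {1..9}"
    then have "f i \<in> S" using bij_betw_apply[OF bij] by blast
    then have "f i \<noteq> 0" using p0 a0 unfolding S_def by auto
    then show "c i \<noteq> 0" by (simp add: c_def)
  qed
  have pe: "(\<Prod>i=1..9. [:c i, 1:]) = (\<Prod>z\<in>S. [:-z, 1:])"
    unfolding c_def using prod.reindex_bij_betw[OF bij, of "\<lambda>z. [:-z, 1:]"] by simp
  have detP: "det ?P = Polynomial.smult (b ^ 3) (\<Prod>i=1..9. [:c i, 1:])" using dec pe by simp
  have bc: "b ^ 3 * (\<Prod>i=1..9. c i) = a ^ 3"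
  proof -
    have "poly (det ?P) 0 = b ^ 3 * (\<Prod>i=1..9. c i)" unfolding detP by (simp add: poly_prod)
    then show ?thesis using p0 by simp
  qed
  have Ec: "eval_mat 3 N A x \<in> carrier_mat 3 3" for x by (simp add: eval_mat_def poly_mat_def)
  have gauge: "(\<forall>u :: complex \<Rightarrow> complex. (\<forall>x. x \<noteq> 0 \<longrightarrow> u x \<noteq> 0 \<and> u (q * x) = a * u x) \<longrightarrow>
          (\<forall>w :: complex \<Rightarrow> complex vec. (\<forall>x. w x \<in> carrier_vec 3) \<longrightarrow>
             ((\<forall>x. x \<noteq> 0 \<longrightarrow> u (q * x) \<cdot>\<^sub>v w (q * x) = eval_mat 3 N A x *\<^sub>v (u x \<cdot>\<^sub>v w x))
              \<longleftrightarrow> (\<forall>x. x \<noteq> 0 \<longrightarrow> w (q * x) = ((1 / a) \<cdot>\<^sub>m eval_mat 3 N A x) *\<^sub>v w x))))"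
  proof (intro allI impI)
    fix u :: "complex \<Rightarrow> complex" and w :: "complex \<Rightarrow> complex vec"
    assume u: "\<forall>x. x \<noteq> 0 \<longrightarrow> u x \<noteq> 0 \<and> u (q * x) = a * u x" and w: "\<forall>x. w x \<in> carrier_vec 3"
    have "(u (q * x) \<cdot>\<^sub>v w (q * x) = eval_mat 3 N A x *\<^sub>v (u x \<cdot>\<^sub>v w x)) \<longleftrightarrow>
          (w (q * x) = ((1 / a) \<cdot>\<^sub>m eval_mat 3 N A x) *\<^sub>v w x)" if x: "x \<noteq> 0" for x
    proof -
      have "eval_mat 3 N A x *\<^sub>v (u x \<cdot>\<^sub>v w x) = u x \<cdot>\<^sub>v (eval_mat 3 N A x *\<^sub>v w x)"
        by (rule mult_mat_vec[OF Ec w[rule_format]])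
      moreover have "((1 / a) \<cdot>\<^sub>m eval_mat 3 N A x) *\<^sub>v w x = (1/a) \<cdot>\<^sub>v (eval_mat 3 N A x *\<^sub>v w x)"
        by (rule smult_mat_vec[OF Ec w[rule_format]])
      moreover have "(a * u x) \<cdot>\<^sub>v w (q * x) = u x \<cdot>\<^sub>v (eval_mat 3 N A x *\<^sub>v w x) \<longleftrightarrow>
          w (q * x) = (1/a) \<cdot>\<^sub>v (eval_mat 3 N A x *\<^sub>v w x)"
        by (rule vec_aux[OF _ a0 w[rule_format]]) (use u x mult_mat_vec_carrier[OF Ec w[rule_format]] in auto)
      ultimately show ?thesis using u x by simp
    qed
    then show "(\<forall>x. x \<noteq> 0 \<longrightarrow> u (q * x) \<cdot>\<^sub>v w (q * x) = eval_mat 3 N A x *\<^sub>v (u x \<cdot>\<^sub>v w x))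
              \<longleftrightarrow> (\<forall>x. x \<noteq> 0 \<longrightarrow> w (q * x) = ((1 / a) \<cdot>\<^sub>m eval_mat 3 N A x) *\<^sub>v w x)" by blast
  qed
  have A3: "A 3 = b \<cdot>\<^sub>m 1\<^sub>m 3" using b N3 by simp
  have A1c: "A 1 \<in> carrier_mat 3 3" and A2c: "A 2 \<in> carrier_mat 3 3" using carr N3 by auto
  have lin: "(1 / a) \<cdot>\<^sub>m eval_mat 3 N A x =
           1\<^sub>m 3 + x \<cdot>\<^sub>m ((1/a) \<cdot>\<^sub>m A 1) + x ^ 2 \<cdot>\<^sub>m ((1/a) \<cdot>\<^sub>m A 2) + (b / a * x ^ 3) \<cdot>\<^sub>m 1\<^sub>m 3" for x
  proof (rule eq_matI)
    fix i j assume i: "i < dim_row (1\<^sub>m 3 + x \<cdot>\<^sub>m ((1/a) \<cdot>\<^sub>m A 1) + x ^ 2 \<cdot>\<^sub>m ((1/a) \<cdot>\<^sub>m A 2) + (b / a * x ^ 3) \<cdot>\<^sub>m 1\<^sub>m (3::nat))"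
      and j: "j < dim_col (1\<^sub>m 3 + x \<cdot>\<^sub>m ((1/a) \<cdot>\<^sub>m A 1) + x ^ 2 \<cdot>\<^sub>m ((1/a) \<cdot>\<^sub>m A 2) + (b / a * x ^ 3) \<cdot>\<^sub>m 1\<^sub>m (3::nat))"
    then have i3: "i < 3" and j3: "j < 3" by auto
    have "eval_mat 3 N A x $$ (i,j) = (\<Sum>k\<le>3. A k $$ (i,j) * x ^ k)"
      using i3 j3 N3 by (simp add: eval_mat_def poly_mat_def poly_sum poly_monom)
    also have "\<dots> = A 0 $$ (i,j) + A 1 $$ (i,j) * x + A 2 $$ (i,j) * x^2 + A 3 $$ (i,j) * x^3"
      by (simp add: numeral_3_eq_3 atMost_Suc numeral_2_eq_2 power2_eq_square)
    finally have ev: "eval_mat 3 N A x $$ (i,j) = A 0 $$ (i,j) + A 1 $$ (i,j) * x + A 2 $$ (i,j) * x^2 + A 3 $$ (i,j) * x^3" .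
    show "((1 / a) \<cdot>\<^sub>m eval_mat 3 N A x) $$ (i, j) =
         (1\<^sub>m 3 + x \<cdot>\<^sub>m ((1/a) \<cdot>\<^sub>m A 1) + x ^ 2 \<cdot>\<^sub>m ((1/a) \<cdot>\<^sub>m A 2) + (b / a * x ^ 3) \<cdot>\<^sub>m 1\<^sub>m 3) $$ (i, j)"
    proof -
      have lhs: "((1 / a) \<cdot>\<^sub>m eval_mat 3 N A x) $$ (i, j) = (1/a) * ((if i = j then a else 0) + A 1 $$ (i,j) * x + A 2 $$ (i,j) * x^2 + (if i = j then b else 0) * x^3)"
        using i3 j3 Ec[of x] by (simp add: ev a A3)
      have rhs: "(1\<^sub>m 3 + x \<cdot>\<^sub>m ((1/a) \<cdot>\<^sub>m A 1) + x ^ 2 \<cdot>\<^sub>m ((1/a) \<cdot>\<^sub>m A 2) + (b / a * x ^ 3) \<cdot>\<^sub>m 1\<^sub>m 3) $$ (i, j)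
          = (if i = j then 1 else 0) + x * ((1/a) * A 1 $$ (i,j)) + x^2 * ((1/a) * A 2 $$ (i,j)) + (b / a * x ^ 3) * (if i = j then 1 else 0)"
        using i3 j3 A1c A2c by simp
      show ?thesis unfolding lhs rhs using a0 by (cases "i = j") (simp_all add: field_simps)
    qed
  qed (use A1c A2c Ec in auto)
  have dsm: "det (map_mat (Polynomial.smult (1 / a)) ?P) = Polynomial.smult ((b / a) ^ 3) (\<Prod>i=1..9. [:c i, 1:])"
    unfolding det_map_smult[OF Pc] detP by (simp add: power_divide)
  have ex12: "\<exists>A1 A2. A1 \<in> carrier_mat 3 3 \<and> A2 \<in> carrier_mat 3 3 \<and>
             (\<forall>x. (1 / a) \<cdot>\<^sub>m eval_mat 3 N A x =
                   1\<^sub>m 3 + x \<cdot>\<^sub>m A1 + x ^ 2 \<cdot>\<^sub>m A2 + (b / a * x ^ 3) \<cdot>\<^sub>m 1\<^sub>m 3)"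
    by (intro exI[of _ "(1/a) \<cdot>\<^sub>m A 1"] exI[of _ "(1/a) \<cdot>\<^sub>m A 2"] conjI allI A1c A2c smult_carrier_mat lin)
  show ?thesis
    unfolding Let_def
    by (intro conjI exI[of _ a] exI[of _ b] exI[of _ c] N3 a0 b0 injc cnz a A3 detP bc gauge ex12 dsm)
qed

end
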